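(* Let $X$ be a Cantor set with a compatible metric $d$, and let $\sigma$ be an aperiodic homeomorphism of $X$. Then $\sigma$ is chain transitive if and only if $\sigma$ is moving.
   Context: $\sigma$ is aperiodic if every $\sigma$-orbit is infinite. Given $\varepsilon>0$ and $x,y\in X$, an $\varepsilon$-chain from $x$ to $y$ is a finite sequence $x_0,x_1,\dots,x_n$ with $x_0=x$, $x_n=y$ and $d(\sigma(x_i),x_{i+1})<\varepsilon$ for $i=0,\dots,n-1$. $\sigma$ is chain transitive if for all $x,y\in X$ and every $\varepsilon>0$ there is an $\varepsilon$-chain from $x$ to $y$. $\sigma$ is moving if for every clopen set $E$ with $E\ne\emptyset$ and $E\ne X$, both $\sigma(E)\setminus E\ne\emptyset$ and $E\setminus\sigma(E)\ne\emptyset$. *)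

theory Defs
  imports "HOL-Analysis.Analysis"
begin

text \<open>The compatible metric is the metric of the ambient metric space type, restricted to X.\<close>
definition cantor_set :: "'a::metric_space set \<Rightarrow> bool" where
  "cantor_set X \<longleftrightarrow> X \<noteq> {} \<and> compact X
     \<and> (\<forall>x\<in>X. connected_component_set X x = {x})
     \<and> (\<forall>x\<in>X. x islimpt X)"

definition orbit :: "('a \<Rightarrow> 'a) \<Rightarrow> 'a \<Rightarrow> 'a set" where
  "orbit \<sigma> x = {(\<sigma> ^^ n) x | n. True}"

definition aperiodic :: "'a set \<Rightarrow> ('a \<Rightarrow> 'a) \<Rightarrow> bool" where
  "aperiodic X \<sigma> \<longleftrightarrow> (\<forall>x\<in>X. infinite (orbit \<sigma> x))"

definition eps_chain :: "'a::metric_space set \<Rightarrow> ('a \<Rightarrow> 'a) \<Rightarrow> real \<Rightarrow> 'a \<Rightarrow> 'a \<Rightarrow> bool" where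
  "eps_chain X \<sigma> \<epsilon> x y \<longleftrightarrow>
     (\<exists>n::nat. \<exists>c::nat \<Rightarrow> 'a. (\<forall>i\<le>n. c i \<in> X) \<and> c 0 = x \<and> c n = y
        \<and> (\<forall>i<n. dist (\<sigma> (c i)) (c (Suc i)) < \<epsilon>))"

definition chain_transitive :: "'a::metric_space set \<Rightarrow> ('a \<Rightarrow> 'a) \<Rightarrow> bool" where
  "chain_transitive X \<sigma> \<longleftrightarrow> (\<forall>x\<in>X. \<forall>y\<in>X. \<forall>\<epsilon>>0. eps_chain X \<sigma> \<epsilon> x y)"

definition clopen_in :: "'a::topological_space set \<Rightarrow> 'a set \<Rightarrow> bool" where
  "clopen_in X E \<longleftrightarrow> openin (top_of_set X) E \<and> closedin (top_of_set X) E"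

definition moving :: "'a::topological_space set \<Rightarrow> ('a \<Rightarrow> 'a) \<Rightarrow> bool" where
  "moving X \<sigma> \<longleftrightarrow> (\<forall>E. clopen_in X E \<and> E \<noteq> {} \<and> E \<noteq> X \<longrightarrow>
       \<sigma> ` E - E \<noteq> {} \<and> E - \<sigma> ` E \<noteq> {})"

end

theory Submission
  imports Defs
begin

lemma sep_compact_closed_metric:
  fixes E T :: "'a::metric_space set"
  assumes "compact E" "closed T" "E \<inter> T = {}" "E \<noteq> {}" "T \<noteq> {}"
  shows "\<exists>d>0. \<forall>a\<in>E. \<forall>b\<in>T. d \<le> dist a b"
proof -
  have "continuous_on E (\<lambda>a. infdist a T)"
    by (intro continuous_intros)
  then obtain a0 where a0: "a0 \<in> E" "\<forall>y\<in>E. infdist a0 T \<le> infdist y T"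
    using continuous_attains_inf[OF assms(1) assms(4)] by blast
  have "a0 \<notin> T" using a0 assms(3) by blast
  hence "infdist a0 T \<noteq> 0" using in_closed_iff_infdist_zero[OF assms(2) assms(5)] by blast
  hence pos: "infdist a0 T > 0" using infdist_nonneg[of a0 T] by linarith
  show ?thesis
  proof (intro exI[of _ "infdist a0 T"] conjI pos ballI)
    fix a b assume "a \<in> E" "b \<in> T"
    thus "infdist a0 T \<le> dist a b" using a0(2) infdist_le[of b T a] by force
  qed
qed

lemma trap_false:
  fixes X :: "'a::metric_space set" and \<sigma> :: "'a \<Rightarrow> 'a"
  assumes "compact X" "chain_transitive X \<sigma>" "clopen_in X E" "E \<noteq> {}" "E \<noteq> X"
    "\<sigma> ` E \<subseteq> E"
  shows False
proof -
  have op: "openin (top_of_set X) E" and cl: "closedin (top_of_set X) E"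
    using assms(3) unfolding clopen_in_def by auto
  have EX: "E \<subseteq> X" using op by (rule openin_imp_subset)
  have cX: "closed X" using assms(1) by (simp add: compact_imp_closed)
  have "closed E" using cl cX closedin_closed_trans by blast
  hence cE: "compact E" using assms(1) EX compact_Int_closed[of X E] by (simp add: Int_absorb1)
  have "closedin (top_of_set X) (X - E)" using op by (simp add: closedin_diff)
  hence cT: "closed (X - E)" using cX closedin_closed_trans by blast
  have ne: "X - E \<noteq> {}" using EX assms(5) by blast
  obtain d where d: "d > 0" "\<forall>a\<in>E. \<forall>b\<in>X - E. d \<le> dist a b"
    using sep_compact_closed_metric[OF cE cT _ assms(4) ne] by blast
  obtain x y where xy: "x \<in> E" "y \<in> X - E" using assms(4) ne by blast
  hence "eps_chain X \<sigma> d x y" using assms(2) EX d(1) unfolding chain_transitive_def by blast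
  then obtain n c where c: "\<forall>i\<le>n. c i \<in> X" "c 0 = x" "c n = y"
      "\<forall>i<n. dist (\<sigma> (c i)) (c (Suc i)) < d"
    unfolding eps_chain_def by blast
  have "i \<le> n \<Longrightarrow> c i \<in> E" for i
  proof (induction i)
    case 0 then show ?case using c xy by simp
  next
    case (Suc i)
    hence ci: "c i \<in> E" by simp
    hence "\<sigma> (c i) \<in> E" using assms(6) by blast
    moreover have "dist (\<sigma> (c i)) (c (Suc i)) < d" using c(4) Suc by simp
    moreover have "c (Suc i) \<in> X" using c(1) Suc by simp
    ultimately show ?case using d(2) by force
  qed
  thus False using c xy by auto
qed

lemma moving_imp_ct:
  fixes X :: "'a::metric_space set" and \<sigma> :: "'a \<Rightarrow> 'a"
  assumes cs: "cantor_set X" and h: "homeomorphism X X \<sigma> \<tau>" and mv: "moving X \<sigma>"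
  shows "chain_transitive X \<sigma>"
  unfolding chain_transitive_def
proof (intro ballI allI impI)
  fix x y and \<epsilon> :: real
  assume x: "x \<in> X" and y: "y \<in> X" and e: "\<epsilon> > 0"
  have cX: "compact X" and comp: "\<forall>p\<in>X. connected_component_set X p = {p}"
    using cs unfolding cantor_set_def by auto
  have clX: "closed X" using cX by (simp add: compact_imp_closed)
  have sX: "\<sigma> ` X = X" and ctn: "continuous_on X \<sigma>"
    using h unfolding homeomorphism_def by auto
  have sXm: "\<sigma> p \<in> X" if "p \<in> X" for p using sX that by blast
  define A where "A = {z. \<exists>n c. n \<ge> 1 \<and> (\<forall>i\<le>n. c i \<in> X) \<and> c 0 = x \<and> c n = z
        \<and> (\<forall>i<n. dist (\<sigma> (c i)) (c (Suc i)) < \<epsilon>)}"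
  have extA: "z \<in> A" if "a \<in> A \<union> {x}" "z \<in> X" "dist (\<sigma> a) z < \<epsilon>" for a z
  proof (cases "a = x")
    case True
    show ?thesis unfolding A_def
      apply (rule CollectI, rule exI[of _ 1], rule exI[of _ "\<lambda>i. if i = 0 then x else z"])
      using True that x by (auto simp: le_Suc_eq)
  next
    case False
    hence "a \<in> A" using that by blast
    then obtain n c where c: "n \<ge> 1" "\<forall>i\<le>n. c i \<in> X" "c 0 = x" "c n = a"
        "\<forall>i<n. dist (\<sigma> (c i)) (c (Suc i)) < \<epsilon>" unfolding A_def by blast
    show ?thesis unfolding A_def
      apply (rule CollectI, rule exI[of _ "Suc n"], rule exI[of _ "c(Suc n := z)"])
      using c that by (auto simp: le_Suc_eq less_Suc_eq)
  qed
  have bk: "z \<in> X \<and> (\<exists>a\<in>A \<union> {x}. dist (\<sigma> a) z < \<epsilon>)" if zA: "z \<in> A" for z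
  proof -
    obtain n c where c: "n \<ge> 1" "\<forall>i\<le>n. c i \<in> X" "c 0 = x" "c n = z"
        "\<forall>i<n. dist (\<sigma> (c i)) (c (Suc i)) < \<epsilon>" using zA unfolding A_def by blast
    then obtain m where m: "n = Suc m" by (cases n) auto
    have "c m \<in> A \<union> {x}"
    proof (cases "m = 0")
      case True thus ?thesis using c by simp
    next
      case False
      hence "c m \<in> A" unfolding A_def
        apply (intro CollectI exI[of _ m] exI[of _ c]) using c m by auto
      thus ?thesis by blast
    qed
    moreover have "dist (\<sigma> (c m)) z < \<epsilon>" using c m by auto
    ultimately show ?thesis using c by auto
  qed
  have AX: "A \<subseteq> X" using bk by blast
  have opA: "openin (top_of_set X) A"
    unfolding openin_euclidean_subtopology_iff
  proof (intro conjI AX ballI)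
    fix z assume "z \<in> A"
    then obtain a where a: "a \<in> A \<union> {x}" "dist (\<sigma> a) z < \<epsilon>" using bk by blast
    show "\<exists>e>0. \<forall>x'\<in>X. dist x' z < e \<longrightarrow> x' \<in> A"
    proof (intro exI[of _ "\<epsilon> - dist (\<sigma> a) z"] conjI ballI impI)
      show "\<epsilon> - dist (\<sigma> a) z > 0" using a by simp
      fix x' assume "x' \<in> X" "dist x' z < \<epsilon> - dist (\<sigma> a) z"
      moreover have "dist (\<sigma> a) x' \<le> dist (\<sigma> a) z + dist x' z"
        by (metis dist_commute dist_triangle)
      ultimately show "x' \<in> A" using extA[OF a(1)] by force
    qed
  qed
  have clAX: "closure A \<subseteq> X" using AX clX by (simp add: closure_minimal)
  define K where "K = closure A \<union> {x}"
  have KX: "K \<subseteq> X" using clAX x K_def by auto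
  have cK: "compact K" using compact_Int_closed[OF cX, of K] KX unfolding K_def
    by (simp add: Int_absorb1)
  define S where "S = \<sigma> ` K"
  have cS: "compact S" unfolding S_def
    by (rule compact_continuous_image[OF continuous_on_subset[OF ctn KX] cK])
  have SA: "S \<subseteq> A"
  proof
    fix w assume "w \<in> S"
    then obtain z where z: "z \<in> K" "w = \<sigma> z" unfolding S_def by blast
    have zX: "z \<in> X" using z KX by blast
    show "w \<in> A"
    proof (cases "z = x")
      case True thus ?thesis using extA[of x "\<sigma> x"] z x e sXm by auto
    next
      case False
      hence zc: "z \<in> closure A" using z K_def by auto
      obtain d where d: "d > 0" "\<forall>x'\<in>X. dist x' z < d \<longrightarrow> dist (\<sigma> x') (\<sigma> z) < \<epsilon>"
        using ctn zX e unfolding continuous_on_iff by blast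
      obtain a where a: "a \<in> A" "dist a z < d" using zc d(1) unfolding closure_approachable by blast
      have "dist (\<sigma> a) (\<sigma> z) < \<epsilon>" using d a AX by blast
      thus ?thesis using extA[of a "\<sigma> z"] a sXm zX z by auto
    qed
  qed
  have "separated_between (top_of_set X) S (X - A)"
  proof (rule cut_wire_fence_theorem)
    show "compact_space (top_of_set X)" using cX by (simp add: compact_space_subtopology)
    show "Hausdorff_space (top_of_set X)" by (simp add: Hausdorff_space_subtopology)
    show "closedin (top_of_set X) S" using cS SA AX
      by (meson closed_subset compact_imp_closed order_trans)
    show "closedin (top_of_set X) (X - A)" using closedin_diff[OF closedin_topspace opA] by simp
    fix C assume "connectedin (top_of_set X) C"
    hence CX: "C \<subseteq> X" and cC: "connected C" by (auto simp: connectedin_subtopology)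
    show "disjnt C S \<or> disjnt C (X - A)"
    proof (cases "C = {}")
      case True thus ?thesis by simp
    next
      case False
      then obtain p where p: "p \<in> C" by blast
      have "C \<subseteq> {p}" using connected_component_maximal[OF p cC CX] comp p CX by auto
      hence "C = {p}" using p by blast
      thus ?thesis using SA by (cases "p \<in> S") (auto simp: disjnt_def)
    qed
  qed
  then obtain U where U: "closedin (top_of_set X) U" "openin (top_of_set X) U" "S \<subseteq> U"
      "X - A \<subseteq> X - U"
    unfolding separated_between by auto
  have UX: "U \<subseteq> X" using U(2) by (rule openin_imp_subset)
  have UA: "U \<subseteq> A" using U(4) UX by blast
  have "\<sigma> ` U \<subseteq> U"
  proof -
    have "\<sigma> ` U \<subseteq> \<sigma> ` K" using UA K_def closure_subset by fastforce
    thus ?thesis using U(3) S_def by blast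
  qed
  moreover have "U \<noteq> {}" using U(3) S_def K_def by blast
  moreover have "clopen_in X U" using U unfolding clopen_in_def by auto
  ultimately have "U = X" using mv unfolding moving_def by blast
  hence "y \<in> A" using UA y by blast
  then obtain n c where c: "n \<ge> 1" "\<forall>i\<le>n. c i \<in> X" "c 0 = x" "c n = y"
        "\<forall>i<n. dist (\<sigma> (c i)) (c (Suc i)) < \<epsilon>" unfolding A_def by blast
  thus "eps_chain X \<sigma> \<epsilon> x y" unfolding eps_chain_def by blast
qed

lemma ct_imp_moving:
  fixes X :: "'a::metric_space set" and \<sigma> :: "'a \<Rightarrow> 'a"
  assumes cs: "cantor_set X" and h: "homeomorphism X X \<sigma> \<tau>" and ct: "chain_transitive X \<sigma>"
  shows "moving X \<sigma>"
  unfolding moving_def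
proof (intro allI impI conjI)
  fix E assume E: "clopen_in X E \<and> E \<noteq> {} \<and> E \<noteq> X"
  have cX: "compact X" using cs unfolding cantor_set_def by auto
  have sX: "\<sigma> ` X = X" and inv: "\<forall>p\<in>X. \<tau> (\<sigma> p) = p"
    using h unfolding homeomorphism_def by auto
  show "\<sigma> ` E - E \<noteq> {}"
    using trap_false[OF cX ct] E by blast
  show "E - \<sigma> ` E \<noteq> {}"
  proof
    assume sub: "E - \<sigma> ` E = {}"
    have op: "openin (top_of_set X) E" and cl: "closedin (top_of_set X) E"
      using E unfolding clopen_in_def by auto
    have EX: "E \<subseteq> X" using op by (rule openin_imp_subset)
    have o2: "openin (top_of_set X) (X - E)" using openin_diff[OF openin_topspace cl] by simp
    have c2: "closedin (top_of_set X) (X - E)" using closedin_diff[OF closedin_topspace op] by simp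
    have "clopen_in X (X - E)" unfolding clopen_in_def using o2 c2 by blast
    moreover have "X - E \<noteq> {}" "X - E \<noteq> X" using E EX by auto
    moreover have "\<sigma> ` (X - E) \<subseteq> X - E"
    proof
      fix w assume "w \<in> \<sigma> ` (X - E)"
      then obtain z where z: "z \<in> X" "z \<notin> E" "w = \<sigma> z" by blast
      have wX: "w \<in> X" using z sX by blast
      show "w \<in> X - E"
      proof (rule ccontr)
        assume "w \<notin> X - E"
        hence "w \<in> E" using wX by blast
        then obtain e where "e \<in> E" "w = \<sigma> e" using sub by blast
        hence "\<tau> (\<sigma> z) = \<tau> (\<sigma> e)" using z by simp
        hence "z = e" using inv z \<open>e \<in> E\<close> EX by (metis subsetD)
        thus False using z \<open>e \<in> E\<close> by blast
      qed
    qed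
    ultimately show False using trap_false[OF cX ct] by blast
  qed
qed

theorem theorem10p3:
  fixes X :: "'a::metric_space set" and \<sigma> :: "'a \<Rightarrow> 'a"
  assumes "cantor_set X"
    and "\<exists>\<tau>. homeomorphism X X \<sigma> \<tau>"
    and "aperiodic X \<sigma>"
  shows "chain_transitive X \<sigma> \<longleftrightarrow> moving X \<sigma>"
proof -
  obtain \<tau> where h: "homeomorphism X X \<sigma> \<tau>" using assms(2) by blast
  show ?thesis using moving_imp_ct[OF assms(1) h] ct_imp_moving[OF assms(1) h] by blast
qed

end
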